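(* Let $m,v,x,y$ be nonzero real numbers, let $s>0$ and let $u,w\in\mathbb{R}$. Let $\mathfrak{n}$ be the five-dimensional real Lie algebra with basis $\{E_1,\dots,E_5\}$ whose only non-vanishing brackets (up to antisymmetry) are $$[E_1,E_2]=mE_3+sE_4+uE_5,\qquad [E_1,E_3]=vE_4+wE_5,\qquad [E_1,E_4]=xE_5,\qquad [E_2,E_3]=yE_5.$$ Equip the corresponding simply connected nilpotent Lie group with the left-invariant Riemannian metric for which $\{E_1,\dots,E_5\}$ is orthonormal. Then this metric is not an algebraic Ricci soliton.
   Context: Let $G$ be a Lie group with Lie algebra $\mathfrak{g}$ and let $g$ be a left-invariant Riemannian metric on $G$. Let $\mathrm{Ric}$ denote the $(1,1)$ Ricci tensor of $g$, viewed as a linear endomorphism of $\mathfrak{g}$. The metric $g$ is an algebraic Ricci soliton if there are a real number $c$ and a derivation $D$ of $\mathfrak{g}$ such that $\mathrm{Ric}=c\,\mathrm{Id}+D$. *)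

theory Defs
  imports "HOL-Analysis.Analysis"
begin

text \<open>A real Lie algebra structure is modelled by a bilinear bracket on a Euclidean space 'a;
  the left-invariant metric is the inner product of 'a (so the elements of Basis are orthonormal).\<close>

text \<open>Levi-Civita connection via the Koszul formula:
  2 g(nabla_X Y, Z) = g([X,Y],Z) - g([Y,Z],X) + g([Z,X],Y).\<close>
definition lc_conn :: "('a::euclidean_space \<Rightarrow> 'a \<Rightarrow> 'a) \<Rightarrow> 'a \<Rightarrow> 'a \<Rightarrow> 'a" where
  "lc_conn br X Y =
     (\<Sum>b\<in>Basis. ((inner (br X Y) b - inner (br Y b) X + inner (br b X) Y) / 2) *\<^sub>R b)"

definition curv :: "('a::euclidean_space \<Rightarrow> 'a \<Rightarrow> 'a) \<Rightarrow> 'a \<Rightarrow> 'a \<Rightarrow> 'a \<Rightarrow> 'a" where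
  "curv br X Y Z = lc_conn br X (lc_conn br Y Z) - lc_conn br Y (lc_conn br X Z)
                   - lc_conn br (br X Y) Z"

definition ricci :: "('a::euclidean_space \<Rightarrow> 'a \<Rightarrow> 'a) \<Rightarrow> 'a \<Rightarrow> 'a \<Rightarrow> real" where
  "ricci br Y Z = (\<Sum>a\<in>Basis. inner (curv br a Y Z) a)"

definition ricci_op :: "('a::euclidean_space \<Rightarrow> 'a \<Rightarrow> 'a) \<Rightarrow> 'a \<Rightarrow> 'a" where
  "ricci_op br Y = (\<Sum>b\<in>Basis. ricci br Y b *\<^sub>R b)"

definition is_derivation :: "('a::real_vector \<Rightarrow> 'a \<Rightarrow> 'a) \<Rightarrow> ('a \<Rightarrow> 'a) \<Rightarrow> bool" where
  "is_derivation br D \<longleftrightarrow> linear D \<and> (\<forall>X Y. D (br X Y) = br (D X) Y + br X (D Y))"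

definition algebraic_ricci_soliton :: "('a::euclidean_space \<Rightarrow> 'a \<Rightarrow> 'a) \<Rightarrow> bool" where
  "algebraic_ricci_soliton br \<longleftrightarrow>
     (\<exists>c D. is_derivation br D \<and> (\<forall>X. ricci_op br X = c *\<^sub>R X + D X))"

text \<open>The five-dimensional nilpotent Lie algebra. Basis vector E_k is axis k 1 in real^5;
  index type 5 has elements 1,2,3,4,5 (where the numeral 5 equals 0 in type 5), all distinct.\<close>
definition E5 :: "5 \<Rightarrow> real^5" where "E5 k = axis k 1"

definition n5_bracket :: "real \<Rightarrow> real \<Rightarrow> real \<Rightarrow> real \<Rightarrow> real \<Rightarrow> real \<Rightarrow> real
                          \<Rightarrow> real^5 \<Rightarrow> real^5 \<Rightarrow> real^5" where
  "n5_bracket m s u v w x y X Y =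
     (X$1 * Y$2 - X$2 * Y$1) *\<^sub>R (m *\<^sub>R E5 3 + s *\<^sub>R E5 4 + u *\<^sub>R E5 5)
   + (X$1 * Y$3 - X$3 * Y$1) *\<^sub>R (v *\<^sub>R E5 4 + w *\<^sub>R E5 5)
   + (X$1 * Y$4 - X$4 * Y$1) *\<^sub>R (x *\<^sub>R E5 5)
   + (X$2 * Y$3 - X$3 * Y$2) *\<^sub>R (y *\<^sub>R E5 5)"

end

theory Submission
  imports Defs
begin

lemma exhaust_5:
  fixes x :: 5
  shows "x = 1 \<or> x = 2 \<or> x = 3 \<or> x = 4 \<or> x = 5"
proof (induct x)
  case (of_int z)
  then have "z = 0 \<or> z = 1 \<or> z = 2 \<or> z = 3 \<or> z = 4" by fastforce
  then show ?case by auto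
qed

lemma UNIV_5: "UNIV = {1, 2, 3, 4, 5::5}"
  using exhaust_5 by auto

lemma distinct5: "(1::5) \<noteq> 2" "(1::5) \<noteq> 3" "(1::5) \<noteq> 4" "(1::5) \<noteq> 5"
  "(2::5) \<noteq> 3" "(2::5) \<noteq> 4" "(2::5) \<noteq> 5" "(3::5) \<noteq> 4" "(3::5) \<noteq> 5" "(4::5) \<noteq> 5"
  by simp_all

lemma sum_5: "sum f (UNIV::5 set) = f 1 + f 2 + f 3 + f 4 + f 5"
  unfolding UNIV_5 by (simp add: distinct5 add.assoc)

lemma Basis5: "(Basis :: (real^5) set) = E5 ` UNIV"
  unfolding Basis_vec_def E5_def by auto

lemma inj_E5: "inj E5"
  unfolding E5_def inj_def by (metis axis_eq_axis zero_neq_one)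

lemma sum_Basis5: "sum f (Basis :: (real^5) set) = f (E5 1) + f (E5 2) + f (E5 3) + f (E5 4) + f (E5 5)"
  unfolding Basis5 by (simp add: sum.reindex inj_E5 sum_5)

lemma inner5: "inner (a::real^5) b = a$1*b$1 + a$2*b$2 + a$3*b$3 + a$4*b$4 + a$5*b$5"
  unfolding inner_vec_def by (simp add: sum_5)

lemma E5_nth: "E5 k $ j = (if j = k then 1 else 0)"
  unfolding E5_def axis_def by simp

lemma br_nth: "n5_bracket m s u v w x y X Y $ k =
   (X$1 * Y$2 - X$2 * Y$1) * (m * E5 3 $ k + s * E5 4 $ k + u * E5 5 $ k)
   + (X$1 * Y$3 - X$3 * Y$1) * (v * E5 4 $ k + w * E5 5 $ k)
   + (X$1 * Y$4 - X$4 * Y$1) * (x * E5 5 $ k)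
   + (X$2 * Y$3 - X$3 * Y$2) * (y * E5 5 $ k)"
  unfolding n5_bracket_def by simp

lemma sum_Basis_comp: "(\<Sum>b\<in>(Basis::(real^5) set). f b * b $ k) = f (E5 k)"
  unfolding sum_Basis5 using exhaust_5[of k] by (auto simp: E5_nth distinct5 distinct5[symmetric])

lemma lc_comp: "lc_conn br X Y $ k = (inner (br X Y) (E5 k) - inner (br Y (E5 k)) X + inner (br (E5 k) X) Y) / 2"
  unfolding lc_conn_def sum_component vector_scaleR_component sum_Basis5
  using exhaust_5[of k] by (auto simp: E5_nth distinct5 distinct5[symmetric])

lemma br_nths: "n5_bracket m s u v w x y X Y $ 1 = 0" "n5_bracket m s u v w x y X Y $ 2 = 0"
  "n5_bracket m s u v w x y X Y $ 3 = m * (X$1 * Y$2 - X$2 * Y$1)"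
  "n5_bracket m s u v w x y X Y $ 4 = s * (X$1 * Y$2 - X$2 * Y$1) + v * (X$1 * Y$3 - X$3 * Y$1)"
  "n5_bracket m s u v w x y X Y $ 5 = u * (X$1 * Y$2 - X$2 * Y$1) + w * (X$1 * Y$3 - X$3 * Y$1) + x * (X$1 * Y$4 - X$4 * Y$1) + y * (X$2 * Y$3 - X$3 * Y$2)"
  by (simp_all add: br_nth E5_nth distinct5 distinct5[symmetric] algebra_simps)

lemma ric31: "ricci (n5_bracket m s u v w x y) (E5 3) (E5 1) = u * y/2"
  unfolding ricci_def curv_def
  apply (simp only: sum_Basis5 inner5 vector_minus_component lc_comp)
  apply (simp add: lc_comp br_nths inner5 E5_nth distinct5 distinct5[symmetric])
  apply (simp add: algebra_simps divide_simps)?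
  done
lemma ric41: "ricci (n5_bracket m s u v w x y) (E5 4) (E5 1) = 0"
  unfolding ricci_def curv_def
  apply (simp only: sum_Basis5 inner5 vector_minus_component lc_comp)
  apply (simp add: lc_comp br_nths inner5 E5_nth distinct5 distinct5[symmetric])
  apply (simp add: algebra_simps divide_simps)?
  done
lemma ric51: "ricci (n5_bracket m s u v w x y) (E5 5) (E5 1) = 0"
  unfolding ricci_def curv_def
  apply (simp only: sum_Basis5 inner5 vector_minus_component lc_comp)
  apply (simp add: lc_comp br_nths inner5 E5_nth distinct5 distinct5[symmetric])
  apply (simp add: algebra_simps divide_simps)?
  done
lemma ric32: "ricci (n5_bracket m s u v w x y) (E5 3) (E5 2) = -(s * v + u * w)/2"
  unfolding ricci_def curv_def
  apply (simp only: sum_Basis5 inner5 vector_minus_component lc_comp)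
  apply (simp add: lc_comp br_nths inner5 E5_nth distinct5 distinct5[symmetric])
  apply (simp add: algebra_simps divide_simps)?
  done
lemma ric42: "ricci (n5_bracket m s u v w x y) (E5 4) (E5 2) = -(u * x)/2"
  unfolding ricci_def curv_def
  apply (simp only: sum_Basis5 inner5 vector_minus_component lc_comp)
  apply (simp add: lc_comp br_nths inner5 E5_nth distinct5 distinct5[symmetric])
  apply (simp add: algebra_simps divide_simps)?
  done
lemma ric52: "ricci (n5_bracket m s u v w x y) (E5 5) (E5 2) = 0"
  unfolding ricci_def curv_def
  apply (simp only: sum_Basis5 inner5 vector_minus_component lc_comp)
  apply (simp add: lc_comp br_nths inner5 E5_nth distinct5 distinct5[symmetric])
  apply (simp add: algebra_simps divide_simps)?
  done

lemma ricop_comp: "ricci_op br Y $ k = ricci br Y (E5 k)"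
  unfolding ricci_op_def sum_component vector_scaleR_component sum_Basis5
  using exhaust_5[of k] by (auto simp: E5_nth distinct5 distinct5[symmetric])

theorem mainTheorem7:
  fixes m s u v w x y :: real
  assumes "m \<noteq> 0" "v \<noteq> 0" "x \<noteq> 0" "y \<noteq> 0" "s > 0"
  shows "\<not> algebraic_ricci_soliton (n5_bracket m s u v w x y)"
proof
  let ?br = "n5_bracket m s u v w x y"
  assume "algebraic_ricci_soliton ?br"
  then obtain c D where der: "is_derivation ?br D" and ric: "\<And>X. ricci_op ?br X = c *\<^sub>R X + D X"
    unfolding algebraic_ricci_soliton_def by blast
  have lin: "linear D" using der unfolding is_derivation_def by blast
  have eq: "D (?br (E5 1) (E5 2)) = ?br (D (E5 1)) (E5 2) + ?br (E5 1) (D (E5 2))"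
    using der unfolding is_derivation_def by blast
  have b12: "?br (E5 1) (E5 2) = m *\<^sub>R E5 3 + s *\<^sub>R E5 4 + u *\<^sub>R E5 5"
    unfolding n5_bracket_def by (simp add: E5_nth distinct5 distinct5[symmetric])
  have Dk: "\<And>k. D (E5 k) = ricci_op ?br (E5 k) - c *\<^sub>R E5 k" using ric by (metis add_diff_cancel_left')
  have L: "D (?br (E5 1) (E5 2)) = m *\<^sub>R D (E5 3) + s *\<^sub>R D (E5 4) + u *\<^sub>R D (E5 5)"
    unfolding b12 by (simp add: linear_add[OF lin] linear_scale[OF lin])
  have c1: "(m *\<^sub>R D (E5 3) + s *\<^sub>R D (E5 4) + u *\<^sub>R D (E5 5)) $ 1 = 0"
    using arg_cong[OF eq, of "\<lambda>z. z $ 1"] unfolding L by (simp add: br_nths)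
  have c2: "(m *\<^sub>R D (E5 3) + s *\<^sub>R D (E5 4) + u *\<^sub>R D (E5 5)) $ 2 = 0"
    using arg_cong[OF eq, of "\<lambda>z. z $ 2"] unfolding L by (simp add: br_nths)
  have e1: "m * (u * y/2) = 0" using c1 unfolding Dk
    by (simp add: ricop_comp ric31 ric41 ric51 E5_nth distinct5 distinct5[symmetric])
  have e2: "m * (-(s * v + u * w)/2) + s * (-(u * x)/2) = 0" using c2 unfolding Dk
    by (simp add: ricop_comp ric32 ric42 ric52 E5_nth distinct5 distinct5[symmetric])
  from e1 assms have "u = 0" by simp
  with e2 assms show False by simp
qed
end
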